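(* If a randomized predictor $f\in\Delta(\mathcal{H})$ is $\epsilon$-decision calibrated, i.e. $\max_{i\in[N]}\max_{j\in[d]}\max_{a\in A}|\mathbb{E}_{h\sim f}\mathbb{E}_{\mathcal{D}}[(y_j-h(x)_j)b_i(h(x),a)]|\le\epsilon$, then it has $2L|A|\epsilon$-swap-type regret: for all receivers $i,i'\in[N]$ and every map $\phi:A\to A$, $\mathbb{E}_{h\sim f}\mathbb{E}_{\mathcal{D}}\big[\sum_{a\in A}v_i(\phi(a),y)b_{i'}(h(x),a)\big]\le\mathbb{E}_{h\sim f}\mathbb{E}_{\mathcal{D}}\big[\sum_{a\in A}v_i(a,y)b_i(h(x),a)\big]+2L|A|\epsilon.$
   Context: Data $(x,y)\in\mathcal{X}\times[-1,1]^d$ drawn from $\mathcal{D}$; $\mathcal{H}$ is a class of functions $h:\mathcal{X}\to[-1,1]^d$, $\Delta(\mathcal{H})$ the distributions over it. All $N$ receivers share a common finite action set $A$; receiver $i$ has utility $v_i:A\times[-1,1]^d\to[0,1]$, linear in $y$, with $|v_i(a,y_1)-v_i(a,y_2)|\le L\|y_1-y_2\|_\infty$. Strict best response: $b_i(z,a)=1$ if $a=\arg\max_{a'\in A}v_i(a',z)$ (fixed deterministic tie-breaking), else $0$. *)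

theory Defs
  imports "HOL-Probability.Probability"
begin

definition cube :: "(real^'d) set" where
  "cube = {y. \<forall>j. \<bar>y $ j\<bar> \<le> 1}"

definition linf :: "real^'d \<Rightarrow> real" where
  "linf y = Max (range (\<lambda>j. \<bar>y $ j\<bar>))"

definition affine_on_cube :: "(real^'d \<Rightarrow> real) \<Rightarrow> bool" where
  "affine_on_cube g \<longleftrightarrow> (\<exists>c w. \<forall>y\<in>cube. g y = c + w \<bullet> y)"

text \<open>Best response with deterministic tie-breaking: among the maximisers,
  the least action with respect to the fixed linear order on the action type.\<close>
definition best_resp :: "('a::{finite,linorder} \<Rightarrow> real^'d \<Rightarrow> real) \<Rightarrow> real^'d \<Rightarrow> 'a" where
  "best_resp u z = Min {a. \<forall>a'. u a' z \<le> u a z}"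

definition br_ind :: "('a::{finite,linorder} \<Rightarrow> real^'d \<Rightarrow> real) \<Rightarrow> real^'d \<Rightarrow> 'a \<Rightarrow> real" where
  "br_ind u z a = (if a = best_resp u z then 1 else 0)"

end

theory Submission
  imports Defs
begin

lemma vec_nth_meas[measurable (raw)]:
  fixes g :: "'b \<Rightarrow> real^'d"
  assumes "g \<in> borel_measurable M"
  shows "(\<lambda>x. g x $ j) \<in> borel_measurable M"
  by (rule borel_measurable_continuous_on[OF _ assms]) (intro continuous_intros)

lemma best_resp_iff:
  fixes u :: "'a::{finite,linorder} \<Rightarrow> real^'d \<Rightarrow> real"
  shows "best_resp u z = a \<longleftrightarrow> (\<forall>a'. u a' z \<le> u a z) \<and> (\<forall>b<a. \<exists>a'. u b z < u a' z)"
proof -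
  define S where "S = {a. \<forall>a'. u a' z \<le> u a z}"
  have "Max (range (\<lambda>a. u a z)) \<in> range (\<lambda>a. u a z)" by (intro Max_in) auto
  then obtain a0 where a0: "u a0 z = Max (range (\<lambda>a. u a z))" by (metis rangeE)
  have "a0 \<in> S" unfolding S_def using a0 by (auto intro: Max_ge)
  hence ne: "S \<noteq> {}" by auto
  have "best_resp u z = a \<longleftrightarrow> a \<in> S \<and> (\<forall>b\<in>S. a \<le> b)"
    unfolding best_resp_def S_def[symmetric] by (rule Min_eq_iff[OF _ ne]) simp
  also have "\<dots> \<longleftrightarrow> (\<forall>a'. u a' z \<le> u a z) \<and> (\<forall>b<a. \<exists>a'. u b z < u a' z)"
    unfolding S_def by (auto simp: not_le) (meson leI not_le)+
  finally show ?thesis .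
qed

lemma best_resp_max:
  fixes u :: "'a::{finite,linorder} \<Rightarrow> real^'d \<Rightarrow> real"
  shows "u a' z \<le> u (best_resp u z) z"
  using best_resp_iff[of u z "best_resp u z"] by auto

lemma sum_br_ind:
  fixes u :: "'a::{finite,linorder} \<Rightarrow> real^'d \<Rightarrow> real"
  shows "(\<Sum>a\<in>UNIV. g a * br_ind u z a) = g (best_resp u z)"
  unfolding br_ind_def by (simp add: if_distrib sum.delta' cong: if_cong)

lemma br_ind_alt:
  fixes u :: "'a::{finite,linorder} \<Rightarrow> real^'d \<Rightarrow> real"
  shows "br_ind u z a = (if (\<forall>a'. u a' z \<le> u a z) \<and> (\<forall>b<a. \<exists>a'. u b z < u a' z) then 1 else 0)"
  unfolding br_ind_def using best_resp_iff[of u z a] by metis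

lemma l1_bound:
  fixes W :: "real^'d" and g :: "real^'d \<Rightarrow> real"
  assumes aff: "\<forall>y\<in>cube. g y = c + W \<bullet> y"
    and lip: "\<forall>y1\<in>cube. \<forall>y2\<in>cube. \<bar>g y1 - g y2\<bar> \<le> L * linf (y1 - y2)"
  shows "(\<Sum>j\<in>UNIV. \<bar>W $ j\<bar>) \<le> L"
proof -
  define y1 :: "real^'d" where "y1 = (\<chi> j. if W $ j \<ge> 0 then 1 else -1)"
  have c1: "y1 \<in> cube" "- y1 \<in> cube" unfolding cube_def y1_def by auto
  have "g y1 - g (-y1) = 2 * (W \<bullet> y1)" using aff c1 by (simp add: inner_minus_right)
  also have "W \<bullet> y1 = (\<Sum>j\<in>UNIV. \<bar>W $ j\<bar>)"
    unfolding inner_vec_def y1_def by (intro sum.cong) auto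
  finally have e: "g y1 - g (-y1) = 2 * (\<Sum>j\<in>UNIV. \<bar>W $ j\<bar>)" .
  have "(\<lambda>j. \<bar>(y1 - - y1) $ j\<bar>) = (\<lambda>_. 2)"
    by (auto simp: y1_def)
  hence "linf (y1 - - y1) = 2"
    unfolding linf_def by (simp only:) simp
  with lip c1 e show ?thesis by (metis abs_of_nonneg sum_nonneg abs_ge_zero mult_le_cancel_left_pos zero_less_numeral mult.commute
      [of L] order.trans abs_ge_self) 
qed

theorem theorem7:
  fixes D :: "('x \<times> (real^'d)) measure"
    and f :: "('x \<Rightarrow> real^'d) measure"
    and H :: "('x \<Rightarrow> real^'d) set"
    and v :: "nat \<Rightarrow> 'a::{finite,linorder} \<Rightarrow> real^'d \<Rightarrow> real"
    and N :: nat and L \<epsilon> :: real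
    and i i' :: nat and \<phi> :: "'a \<Rightarrow> 'a"
  assumes probD: "prob_space D"
    and probf: "prob_space f"
    and D_labels: "\<forall>p\<in>space D. snd p \<in> cube"
    and snd_meas: "snd \<in> borel_measurable D"
    and H_range: "\<forall>h\<in>H. \<forall>x. h x \<in> cube"
    and f_on_H: "space f \<subseteq> H"
    and eval_meas: "(\<lambda>(h, p). h (fst p)) \<in> borel_measurable (f \<Otimes>\<^sub>M D)"
    and v_range: "\<forall>k<N. \<forall>a. \<forall>y\<in>cube. 0 \<le> v k a y \<and> v k a y \<le> 1"
    and v_lin: "\<forall>k<N. \<forall>a. affine_on_cube (v k a)"
    and v_lip: "\<forall>k<N. \<forall>a. \<forall>y1\<in>cube. \<forall>y2\<in>cube. \<bar>v k a y1 - v k a y2\<bar> \<le> L * linf (y1 - y2)"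
    and calib: "\<forall>k<N. \<forall>j. \<forall>a.
       \<bar>\<integral>h. (\<integral>p. (snd p $ j - h (fst p) $ j) * br_ind (v k) (h (fst p)) a \<partial>D) \<partial>f\<bar> \<le> \<epsilon>"
    and i: "i < N" and i': "i' < N"
  shows "(\<integral>h. (\<integral>p. (\<Sum>a\<in>UNIV. v i (\<phi> a) (snd p) * br_ind (v i') (h (fst p)) a) \<partial>D) \<partial>f)
         \<le> (\<integral>h. (\<integral>p. (\<Sum>a\<in>UNIV. v i a (snd p) * br_ind (v i) (h (fst p)) a) \<partial>D) \<partial>f)
            + 2 * L * real CARD('a) * \<epsilon>"
proof -
  interpret pf: prob_space f by fact
  interpret pD: prob_space D by fact
  interpret pp: pair_prob_space f D ..
  define P where "P = f \<Otimes>\<^sub>M D"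
  interpret pP: prob_space P unfolding P_def by (rule prob_space_pair) (simp_all add: probD probf)
  define z where "z = (\<lambda>\<omega>::('x \<Rightarrow> real^'d) \<times> ('x \<times> (real^'d)). fst \<omega> (fst (snd \<omega>)))"
  define y where "y = (\<lambda>\<omega>::('x \<Rightarrow> real^'d) \<times> ('x \<times> (real^'d)). snd (snd \<omega>))"
  have spP: "space P = space f \<times> space D" unfolding P_def by (simp add: space_pair_measure)
  have z_meas[measurable]: "z \<in> borel_measurable P"
    using eval_meas unfolding P_def z_def by (simp add: case_prod_beta')
  have y_meas[measurable]: "y \<in> borel_measurable P"
    unfolding P_def y_def by (rule measurable_compose[OF measurable_snd snd_meas])
  have z_cube: "z \<omega> \<in> cube" if "\<omega> \<in> space P" for \<omega>
    using that H_range f_on_H unfolding spP z_def by auto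
  have y_cube: "y \<omega> \<in> cube" if "\<omega> \<in> space P" for \<omega>
    using that D_labels unfolding spP y_def by auto
  have ex: "\<exists>cw. \<forall>y\<in>cube. v k a y = fst cw + snd cw \<bullet> y" if "k < N" for k a
    using v_lin that unfolding affine_on_cube_def by fastforce
  define g where "g k a = (SOME cw. \<forall>y\<in>cube. v k a y = fst cw + snd cw \<bullet> y)" for k a
  have g: "\<And>k a y. k < N \<Longrightarrow> y \<in> cube \<Longrightarrow> v k a y = fst (g k a) + snd (g k a) \<bullet> y"
    unfolding g_def using someI_ex[OF ex] by blast
  define C where "C k a = fst (g k a)" for k a
  define W where "W k a = snd (g k a)" for k a
  have aff: "\<And>k a y. k < N \<Longrightarrow> y \<in> cube \<Longrightarrow> v k a y = C k a + W k a \<bullet> y"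
    using g unfolding C_def W_def by blast
  have l1: "(\<Sum>j\<in>UNIV. \<bar>W k a $ j\<bar>) \<le> L" if "k < N" for k a
    using l1_bound[of "v k a" "C k a" "W k a" L] aff[OF that] v_lip that by blast
  have vz_meas: "(\<lambda>\<omega>. v k a (z \<omega>)) \<in> borel_measurable P" if "k < N" for k a
  proof -
    have "(\<lambda>\<omega>. C k a + W k a \<bullet> z \<omega>) \<in> borel_measurable P" by measurable
    then show ?thesis by (rule measurable_cong[THEN iffD1, rotated]) (simp add: aff[OF that] z_cube)
  qed
  have vy_meas: "(\<lambda>\<omega>. v k a (y \<omega>)) \<in> borel_measurable P" if "k < N" for k a
  proof -
    have "(\<lambda>\<omega>. C k a + W k a \<bullet> y \<omega>) \<in> borel_measurable P" by measurable
    then show ?thesis by (rule measurable_cong[THEN iffD1, rotated]) (simp add: aff[OF that] y_cube)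
  qed
  have B_meas: "(\<lambda>\<omega>. br_ind (v k) (z \<omega>) a) \<in> borel_measurable P" if "k < N" for k a
  proof -
    note [measurable] = vz_meas[OF that]
    show ?thesis unfolding br_ind_alt by measurable
  qed
  define B where "B k a \<omega> = br_ind (v k) (z \<omega>) a" for k a \<omega>
  define e where "e j \<omega> = y \<omega> $ j - z \<omega> $ j" for j \<omega>
  have intg: "integrable P G" if "G \<in> borel_measurable P" "\<forall>\<omega>\<in>space P. \<bar>G \<omega>\<bar> \<le> Bd" for G and Bd :: real
    by (rule pP.integrable_const_bound[where B=Bd]) (use that in auto)
  have fub: "(\<integral>h. (\<integral>p. G (h,p) \<partial>D) \<partial>f) = integral\<^sup>L P G" if "integrable P G" for G :: "_ \<Rightarrow> real"
    using that unfolding P_def by (rule pp.integral_fst')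
  have B_bd: "\<bar>B k a \<omega>\<bar> \<le> 1" for k a \<omega> unfolding B_def br_ind_def by simp
  have e_bd: "\<bar>e j \<omega>\<bar> \<le> 2" if "\<omega> \<in> space P" for j \<omega>
  proof -
    have "\<bar>y \<omega> $ j\<bar> \<le> 1" "\<bar>z \<omega> $ j\<bar> \<le> 1" using y_cube[OF that] z_cube[OF that] unfolding cube_def by auto
    then show ?thesis unfolding e_def by linarith
  qed
  have vy_bd: "\<bar>v k a (y \<omega>)\<bar> \<le> 1" if "k < N" "\<omega> \<in> space P" for k a \<omega>
    using v_range that y_cube[OF that(2)] by (metis abs_of_nonneg)
  have B_meas': "B k a \<in> borel_measurable P" if "k < N" for k a
    unfolding B_def using B_meas[OF that] .
  have e_meas: "e j \<in> borel_measurable P" for j unfolding e_def by measurable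
  have int_eB: "integrable P (\<lambda>\<omega>. e j \<omega> * B k a \<omega>)" if "k < N" for j k a
  proof (rule intg[of _ 2])
    show "(\<lambda>\<omega>. e j \<omega> * B k a \<omega>) \<in> borel_measurable P"
      using B_meas'[OF that] e_meas by (intro borel_measurable_times)
    show "\<forall>\<omega>\<in>space P. \<bar>e j \<omega> * B k a \<omega>\<bar> \<le> 2"
      using e_bd by (auto simp: B_def br_ind_def)
  qed
  have int_vB: "integrable P (\<lambda>\<omega>. v k b (y \<omega>) * B k' a \<omega>)" if "k < N" "k' < N" for k k' a b
  proof (rule intg[of _ 1])
    show "(\<lambda>\<omega>. v k b (y \<omega>) * B k' a \<omega>) \<in> borel_measurable P"
      using vy_meas[OF that(1)] B_meas'[OF that(2)] by (intro borel_measurable_times)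
    show "\<forall>\<omega>\<in>space P. \<bar>v k b (y \<omega>) * B k' a \<omega>\<bar> \<le> 1"
      using vy_bd[OF that(1)] by (auto simp: B_def br_ind_def)
  qed
  have cal: "\<bar>integral\<^sup>L P (\<lambda>\<omega>. e j \<omega> * B k a \<omega>)\<bar> \<le> \<epsilon>" if "k < N" for j k a
    using calib[rule_format, OF that, of j a] fub[OF int_eB[OF that, of j a]] by (simp add: e_def B_def y_def z_def)
  have eps: "0 \<le> \<epsilon>" using cal[OF i] by (meson abs_ge_zero order.trans)
  define G1 where "G1 \<omega> = (\<Sum>a\<in>UNIV. v i (\<phi> a) (y \<omega>) * B i' a \<omega>)" for \<omega>
  define G2 where "G2 \<omega> = (\<Sum>a\<in>UNIV. v i a (y \<omega>) * B i a \<omega>)" for \<omega>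
  define E1 where "E1 \<omega> = (\<Sum>a\<in>UNIV. \<Sum>j\<in>UNIV. W i (\<phi> a) $ j * (e j \<omega> * B i' a \<omega>))" for \<omega>
  define E2 where "E2 \<omega> = (\<Sum>a\<in>UNIV. \<Sum>j\<in>UNIV. W i a $ j * (e j \<omega> * B i a \<omega>))" for \<omega>
  have iG1: "integrable P G1" unfolding G1_def using int_vB i i' by auto
  have iG2: "integrable P G2" unfolding G2_def using int_vB i by auto
  have iE1: "integrable P E1" unfolding E1_def using int_eB i' by auto
  have iE2: "integrable P E2" unfolding E2_def using int_eB i by auto
  have LHS: "(\<integral>h. (\<integral>p. (\<Sum>a\<in>UNIV. v i (\<phi> a) (snd p) * br_ind (v i') (h (fst p)) a) \<partial>D) \<partial>f) = integral\<^sup>L P G1"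
    using fub[OF iG1] by (simp add: G1_def B_def y_def z_def)
  have RHS: "(\<integral>h. (\<integral>p. (\<Sum>a\<in>UNIV. v i a (snd p) * br_ind (v i) (h (fst p)) a) \<partial>D) \<partial>f) = integral\<^sup>L P G2"
    using fub[OF iG2] by (simp add: G2_def B_def y_def z_def)
  have vsplit: "v i b (y \<omega>) = v i b (z \<omega>) + (\<Sum>j\<in>UNIV. W i b $ j * e j \<omega>)" if "\<omega> \<in> space P" for b \<omega>
  proof -
    have "v i b (y \<omega>) - v i b (z \<omega>) = W i b \<bullet> (y \<omega> - z \<omega>)"
      using aff[OF i] y_cube[OF that] z_cube[OF that] by (simp add: inner_diff_right)
    also have "\<dots> = (\<Sum>j\<in>UNIV. W i b $ j * e j \<omega>)" unfolding inner_vec_def e_def by simp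
    finally show ?thesis by simp
  qed
  have pw: "G1 \<omega> \<le> G2 \<omega> + E1 \<omega> - E2 \<omega>" if "\<omega> \<in> space P" for \<omega>
  proof -
    have s1: "G1 \<omega> = (\<Sum>a\<in>UNIV. v i (\<phi> a) (z \<omega>) * B i' a \<omega>) + E1 \<omega>"
      unfolding G1_def E1_def vsplit[OF that]
      by (simp add: algebra_simps sum.distrib sum_distrib_right sum_distrib_left)
    have s2: "G2 \<omega> = (\<Sum>a\<in>UNIV. v i a (z \<omega>) * B i a \<omega>) + E2 \<omega>"
      unfolding G2_def E2_def vsplit[OF that]
      by (simp add: algebra_simps sum.distrib sum_distrib_right sum_distrib_left)
    have "(\<Sum>a\<in>UNIV. v i (\<phi> a) (z \<omega>) * B i' a \<omega>) \<le> (\<Sum>a\<in>UNIV. v i a (z \<omega>) * B i a \<omega>)"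
      unfolding B_def sum_br_ind by (rule best_resp_max)
    with s1 s2 show ?thesis by linarith
  qed
  have sbd: "\<bar>\<Sum>a\<in>UNIV. \<Sum>j\<in>UNIV. W i (\<psi> a) $ j * I a j\<bar> \<le> real CARD('a) * L * \<epsilon>"
    if hI: "\<And>a j. \<bar>I a j\<bar> \<le> \<epsilon>" for \<psi> :: "'a \<Rightarrow> 'a" and I
  proof -
    have "\<bar>\<Sum>a\<in>UNIV. \<Sum>j\<in>UNIV. W i (\<psi> a) $ j * I a j\<bar> \<le> (\<Sum>a\<in>UNIV. \<Sum>j\<in>UNIV. \<bar>W i (\<psi> a) $ j * I a j\<bar>)"
      by (rule order.trans[OF sum_abs sum_mono]) (rule sum_abs)
    also have "\<dots> \<le> (\<Sum>a\<in>UNIV. \<Sum>j\<in>UNIV. \<bar>W i (\<psi> a) $ j\<bar> * \<epsilon>)"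
      by (intro sum_mono) (simp add: abs_mult hI mult_left_mono)
    also have "\<dots> = (\<Sum>a\<in>UNIV. (\<Sum>j\<in>UNIV. \<bar>W i (\<psi> a) $ j\<bar>) * \<epsilon>)"
      by (simp add: sum_distrib_right)
    also have "\<dots> \<le> (\<Sum>a\<in>(UNIV::'a set). L * \<epsilon>)"
      by (intro sum_mono mult_right_mono l1[OF i] eps)
    finally show ?thesis by simp
  qed
  have E1eq: "integral\<^sup>L P E1 = (\<Sum>a\<in>UNIV. \<Sum>j\<in>UNIV. W i (\<phi> a) $ j * integral\<^sup>L P (\<lambda>\<omega>. e j \<omega> * B i' a \<omega>))"
    unfolding E1_def using int_eB[OF i']
    by simp
  have E2eq: "integral\<^sup>L P E2 = (\<Sum>a\<in>UNIV. \<Sum>j\<in>UNIV. W i (id a) $ j * integral\<^sup>L P (\<lambda>\<omega>. e j \<omega> * B i a \<omega>))"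
    unfolding E2_def using int_eB[OF i]
    by simp
  have iE: "integral\<^sup>L P E1 \<le> real CARD('a) * L * \<epsilon>" "- integral\<^sup>L P E2 \<le> real CARD('a) * L * \<epsilon>"
    using sbd[of "\<lambda>a j. integral\<^sup>L P (\<lambda>\<omega>. e j \<omega> * B i' a \<omega>)" \<phi>]
      sbd[of "\<lambda>a j. integral\<^sup>L P (\<lambda>\<omega>. e j \<omega> * B i a \<omega>)" id]
      cal[OF i'] cal[OF i] unfolding E1eq E2eq by auto
  have "integral\<^sup>L P G1 \<le> integral\<^sup>L P (\<lambda>\<omega>. G2 \<omega> + E1 \<omega> - E2 \<omega>)"
    by (rule integral_mono) (use iG1 iG2 iE1 iE2 pw in auto)
  also have "\<dots> = integral\<^sup>L P G2 + integral\<^sup>L P E1 - integral\<^sup>L P E2"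
    using iG2 iE1 iE2 by simp
  finally have "integral\<^sup>L P G1 \<le> integral\<^sup>L P G2 + integral\<^sup>L P E1 - integral\<^sup>L P E2" .
  with iE show ?thesis unfolding LHS RHS by (simp add: algebra_simps)
qed

end
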